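(* Let $\kappa$ be a gravitational lens satisfying the conditions in the context, and let $\alpha(x)=\frac{2}{x}\int_0^x\kappa(t)\,t\,dt$ for $x>0$ be its normalized deflection angle. An Einstein ring is a radius $x_E>0$ with $\alpha(x_E)=x_E$. Then at least one Einstein ring exists if and only if $\kappa(0)>1$ (where $\kappa(0)=+\infty$ for singular lenses).
   Context: A gravitational lens (in a single lens plane) is given by a normalized surface density $\kappa$ on the plane $\mathbb{R}^2$ satisfying: (i) Continuity: $\kappa:\mathbb{R}^2\to[0,\infty)$ is continuous, except possibly at the origin for singular lenses. (ii) Circular symmetry: $\kappa$ depends only on the radius $x=\|\mathbf{x}\|$; write $\kappa=\kappa(x)$. (iii) Finiteness: $\kappa(x)<\infty$ for $x>0$; $\kappa(0)=1/C_1$ for a constant $C_1\ge 0$ (so $\kappa(0)=+\infty$ when $C_1=0$); and $\lim_{x\to\infty}\kappa(x)\,x=C_2$ for a constant $0\le C_2<\infty$. (iv) Self-gravitation: $\kappa(x)<\bar\kappa(x)$ for $x>0$, where $\bar\kappa(x)=\frac{2}{x^2}\int_0^x\kappa(t)\,t\,dt$. The lens is called singular if and only if $C_1=0$, and non-singular otherwise. The deflection angle $\alpha$ is the radial derivative of the lensing potential $f$ solving $\Delta f=2\kappa$ (with deflection vanishing as small as possible at infinity), which for a circularly symmetric lens is $\alpha(x)=\frac{2}{x}\int_0^x\kappa(t)\,t\,dt$. *)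

theory Defs
  imports "HOL-Analysis.Analysis"
begin

text \<open>A circularly symmetric lens is represented by its radial profile
  kappa :: real => real, of which only the values on [0, infinity) matter.\<close>

definition mean_density :: "(real \<Rightarrow> real) \<Rightarrow> real \<Rightarrow> real" where
  "mean_density \<kappa> x = 2 / x\<^sup>2 * integral {0..x} (\<lambda>t. \<kappa> t * t)"

definition deflection :: "(real \<Rightarrow> real) \<Rightarrow> real \<Rightarrow> real" where
  "deflection \<kappa> x = 2 / x * integral {0..x} (\<lambda>t. \<kappa> t * t)"

text \<open>For C1 = 0 (singular lens)
  kappa(0) = +infinity is encoded as kappa(x) tending to +infinity as x -> 0+;
  for C1 > 0 kappa(0) = 1/C1 and kappa is continuous at the origin.\<close>
definition grav_lens :: "(real \<Rightarrow> real) \<Rightarrow> real \<Rightarrow> real \<Rightarrow> bool" where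
  "grav_lens \<kappa> C1 C2 \<longleftrightarrow>
     continuous_on {0<..} \<kappa> \<and>
     (\<forall>x>0. 0 \<le> \<kappa> x) \<and>
     0 \<le> C1 \<and>
     (C1 > 0 \<longrightarrow> \<kappa> 0 = 1 / C1 \<and> continuous (at_right 0) \<kappa>) \<and>
     (C1 = 0 \<longrightarrow> filterlim \<kappa> at_top (at_right 0)) \<and>
     0 \<le> C2 \<and> ((\<lambda>x. \<kappa> x * x) \<longlongrightarrow> C2) at_top \<and>
     (\<forall>x>0. (\<lambda>t. \<kappa> t * t) integrable_on {0..x}) \<and>
     (\<forall>x>0. \<kappa> x < mean_density \<kappa> x)"

definition singular_lens :: "real \<Rightarrow> bool" where
  "singular_lens C1 \<longleftrightarrow> C1 = 0"

end

theory Submission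
  imports Defs
begin

lemma F_deriv:
  assumes g: "grav_lens \<kappa> C1 C2" and x: "x > 0"
  shows "((\<lambda>y. integral {0..y} (\<lambda>t. \<kappa> t * t)) has_real_derivative \<kappa> x * x) (at x)"
proof -
  have co: "continuous_on {0<..} \<kappa>" and int: "(\<lambda>t. \<kappa> t * t) integrable_on {0..2*x}"
    using g x unfolding grav_lens_def by auto
  have "isCont \<kappa> x" using co x continuous_on_eq_continuous_at[OF open_greaterThan] by auto
  hence "isCont (\<lambda>t. \<kappa> t * t) x" by (intro continuous_intros) auto
  hence c: "continuous (at x within ({0..2*x} - {})) (\<lambda>t. \<kappa> t * t)"
    using continuous_at_imp_continuous_within by blast
  have "((\<lambda>u. integral {0..u} (\<lambda>t. \<kappa> t * t)) has_vector_derivative \<kappa> x * x) (at x within ({0..2*x} - {}))"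
    by (rule integral_has_vector_derivative_continuous_at[OF int _ _ c]) (use x in auto)
  moreover have "at x within ({0..2*x} - {}) = at x"
    by (rule at_within_interior) (use x in auto)
  ultimately show ?thesis by (simp add: has_real_derivative_iff_has_vector_derivative)
qed

lemma m_deriv:
  assumes g: "grav_lens \<kappa> C1 C2" and x: "x > 0"
  shows "\<exists>y. DERIV (mean_density \<kappa>) x :> y \<and> y < 0"
proof -
  define F where "F = (\<lambda>y. integral {0..y} (\<lambda>t. \<kappa> t * t))"
  have mF: "mean_density \<kappa> = (\<lambda>y. 2 / y\<^sup>2 * F y)" unfolding mean_density_def F_def by auto
  have dF: "(F has_real_derivative \<kappa> x * x) (at x)" unfolding F_def by (rule F_deriv[OF g x])
  have d2: "((\<lambda>y. 2 / y\<^sup>2) has_real_derivative (-4 / x^3)) (at x)"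
    using x by (auto intro!: derivative_eq_intros simp: field_simps power2_eq_square power3_eq_cube)
  have D: "DERIV (mean_density \<kappa>) x :> (-4 / x^3 * F x + 2 / x\<^sup>2 * (\<kappa> x * x))"
    unfolding mF by (rule DERIV_cong[OF DERIV_mult[OF d2 dF]]) (simp add: algebra_simps)
  have lt: "\<kappa> x < 2 / x\<^sup>2 * F x" using g x unfolding grav_lens_def mean_density_def F_def by auto
  have "-4 / x^3 * F x + 2 / x\<^sup>2 * (\<kappa> x * x) = 2 / x * (\<kappa> x - 2 / x\<^sup>2 * F x)"
    using x by (simp add: field_simps power2_eq_square power3_eq_cube)
  also have "\<dots> < 0" using lt x by (intro mult_pos_neg) auto
  finally show ?thesis using D by blast
qed

lemma m_decr:
  assumes g: "grav_lens \<kappa> C1 C2" and "0 < a" "a < b"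
  shows "mean_density \<kappa> b < mean_density \<kappa> a"
proof (rule DERIV_neg_imp_decreasing[OF \<open>a < b\<close>])
  fix x assume "a \<le> x" "x \<le> b"
  then have "x > 0" using \<open>0 < a\<close> by linarith
  then show "\<exists>y. DERIV (mean_density \<kappa>) x :> y \<and> y < 0" by (rule m_deriv[OF g])
qed

lemma m_cont:
  assumes g: "grav_lens \<kappa> C1 C2" and "0 < a"
  shows "continuous_on {a..b} (mean_density \<kappa>)"
proof (intro continuous_at_imp_continuous_on ballI)
  fix x assume "x \<in> {a..b}"
  then obtain y where "DERIV (mean_density \<kappa>) x :> y" using m_deriv[OF g, of x] assms by auto
  then show "isCont (mean_density \<kappa>) x" by (rule DERIV_isCont)
qed

lemma lin_int:
  fixes x c :: real
  assumes "0 \<le> x"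
  shows "((\<lambda>t. c * t) has_integral (c * x\<^sup>2 / 2)) {0..x}"
proof -
  have "((\<lambda>t. c * t) has_integral ((\<lambda>t. c * t\<^sup>2 / 2) x - (\<lambda>t. c * t\<^sup>2 / 2) 0)) {0..x}"
    by (rule fundamental_theorem_of_calculus[OF assms])
       (auto intro!: derivative_eq_intros simp: has_real_derivative_iff_has_vector_derivative[symmetric])
  then show ?thesis by simp
qed

lemma exists_small:
  assumes g: "grav_lens \<kappa> C1 C2"
  shows "\<exists>b>0. mean_density \<kappa> b < 1"
proof -
  define F where "F = (\<lambda>y. integral {0..y} (\<lambda>t. \<kappa> t * t))"
  have lim: "((\<lambda>x. \<kappa> x * x) \<longlongrightarrow> C2) at_top" and C2: "0 \<le> C2"
    and int: "\<forall>x>0. (\<lambda>t. \<kappa> t * t) integrable_on {0..x}"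
    using g unfolding grav_lens_def by auto
  have "eventually (\<lambda>t. \<kappa> t * t < C2 + 1) at_top"
    using order_tendstoD(2)[OF lim, of "C2+1"] by simp
  then obtain T where T: "\<And>t. t \<ge> T \<Longrightarrow> \<kappa> t * t < C2 + 1" by (auto simp: eventually_at_top_linorder)
  define T' where "T' = max T 1"
  define A where "A = \<bar>F T'\<bar>"
  define B where "B = C2 + 1"
  define x where "x = T' + 2 * (A + B) + 1"
  have T'1: "T' \<ge> 1" unfolding T'_def by auto
  have A0: "A \<ge> 0" and B0: "B > 0" using C2 unfolding A_def B_def by auto
  have xT: "x \<ge> T'" and x1: "x \<ge> 1" and xAB: "x > 2 * (A + B)" using A0 B0 T'1 unfolding x_def by auto
  have intx: "(\<lambda>t. \<kappa> t * t) integrable_on {0..x}" using int x1 by auto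
  have comb: "F T' + integral {T'..x} (\<lambda>t. \<kappa> t * t) = F x"
    unfolding F_def using Henstock_Kurzweil_Integration.integral_combine[where a=0 and c=T' and b=x and f="\<lambda>t. \<kappa> t * t"] T'1 xT intx by simp
  have "integral {T'..x} (\<lambda>t. \<kappa> t * t) \<le> integral {T'..x} (\<lambda>t. B)"
  proof (rule integral_le)
    show "(\<lambda>t. \<kappa> t * t) integrable_on {T'..x}"
      by (rule integrable_subinterval_real[OF intx]) (use T'1 in auto)
    show "(\<lambda>t. B) integrable_on {T'..x}" by (rule integrable_const_ivl)
    fix t assume "t \<in> {T'..x}"
    then show "\<kappa> t * t \<le> B" using T[of t] unfolding B_def T'_def by auto
  qed
  also have "\<dots> = B * (x - T')" using xT by simp
  also have "\<dots> \<le> B * x" using B0 T'1 by auto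
  finally have "F x \<le> A + B * x" using comb unfolding A_def by linarith
  hence "mean_density \<kappa> x \<le> 2 / x\<^sup>2 * (A + B * x)"
    unfolding mean_density_def F_def using x1 by (intro mult_left_mono) auto
  also have "\<dots> \<le> 2 / x\<^sup>2 * ((A + B) * x)"
    using x1 A0 by (intro mult_left_mono) (auto simp: algebra_simps intro: mult_left_mono[of 1 x A, simplified])
  also have "\<dots> = 2 * (A + B) / x" using x1 by (simp add: power2_eq_square field_simps)
  also have "\<dots> < 1" using xAB x1 by simp
  finally show ?thesis using x1 by (intro exI[of _ x]) auto
qed

lemma m_gt_kappa:
  assumes g: "grav_lens \<kappa> C1 C2" and "x > 0"
  shows "\<kappa> x < mean_density \<kappa> x"
  using assms unfolding grav_lens_def by auto

theorem theorem1:
  fixes \<kappa> :: "real \<Rightarrow> real" and C1 C2 :: real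
  assumes "grav_lens \<kappa> C1 C2"
  shows "(\<exists>xE>0. deflection \<kappa> xE = xE) \<longleftrightarrow> (singular_lens C1 \<or> \<kappa> 0 > 1)"
proof -
  note g = assms
  have defl: "deflection \<kappa> x = x \<longleftrightarrow> mean_density \<kappa> x = 1" if "x > 0" for x
    using that unfolding deflection_def mean_density_def
    by (auto simp: power2_eq_square field_simps)
  show ?thesis
  proof
    assume "\<exists>xE>0. deflection \<kappa> xE = xE"
    then obtain xE where xE: "xE > 0" "mean_density \<kappa> xE = 1" using defl by blast
    show "singular_lens C1 \<or> \<kappa> 0 > 1"
    proof (rule ccontr)
      assume "\<not> ?thesis"
      hence C1: "C1 > 0" and k0: "\<kappa> 0 \<le> 1"
        using g unfolding singular_lens_def grav_lens_def by auto
      have cont: "(\<kappa> \<longlongrightarrow> \<kappa> 0) (at_right 0)"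
        using g C1 unfolding grav_lens_def continuous_within by auto
      define x1 where "x1 = xE / 2"
      have x1: "x1 > 0" "x1 < xE" using xE unfolding x1_def by auto
      have mx1: "mean_density \<kappa> x1 > 1" using m_decr[OF g x1] xE by simp
      define c where "c = \<kappa> 0 + (mean_density \<kappa> x1 - 1)"
      have "eventually (\<lambda>t. \<kappa> t < c) (at_right 0)"
        using order_tendstoD(2)[OF cont, of c] mx1 unfolding c_def by simp
      then obtain d where d: "d > 0" "\<And>t. t > 0 \<Longrightarrow> t < d \<Longrightarrow> \<kappa> t < c"
        by (auto simp: eventually_at_right_field)
      define x where "x = min d x1 / 2"
      have x: "x > 0" "x < d" "x < x1" using d x1 unfolding x_def by auto
      have intx: "(\<lambda>t. \<kappa> t * t) integrable_on {0..x}" using g x unfolding grav_lens_def by auto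
      have "integral {0..x} (\<lambda>t. \<kappa> t * t) \<le> integral {0..x} (\<lambda>t. c * t)"
      proof (rule integral_le[OF intx])
        show "(\<lambda>t. c * t) integrable_on {0..x}" using lin_int[of x c] x by (auto intro: has_integral_integrable)
        fix t assume t: "t \<in> {0..x}"
        show "\<kappa> t * t \<le> c * t"
        proof (cases "t = 0")
          case False
          then have "t > 0" using t by auto
          then show ?thesis using d(2)[of t] t x by (intro mult_right_mono) auto
        qed simp
      qed
      also have "\<dots> = c * x\<^sup>2 / 2" using lin_int[of x c] x by (auto intro: integral_unique)
      finally have "mean_density \<kappa> x \<le> 2 / x\<^sup>2 * (c * x\<^sup>2 / 2)"
        unfolding mean_density_def using x by (intro mult_left_mono) auto
      also have "\<dots> = c" using x by simp
      also have "\<dots> \<le> mean_density \<kappa> x1" using k0 unfolding c_def by simp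
      finally show False using m_decr[OF g x(1) x(3)] by simp
    qed
  next
    assume H: "singular_lens C1 \<or> \<kappa> 0 > 1"
    have ev: "eventually (\<lambda>t. \<kappa> t > 1) (at_right 0)"
    proof (cases "C1 = 0")
      case True
      then have "filterlim \<kappa> at_top (at_right 0)" using g unfolding grav_lens_def by auto
      then show ?thesis by (simp add: filterlim_at_top_dense)
    next
      case False
      then have C1: "C1 > 0" and k0: "\<kappa> 0 > 1"
        using g H unfolding singular_lens_def grav_lens_def by auto
      have cont: "(\<kappa> \<longlongrightarrow> \<kappa> 0) (at_right 0)"
        using g C1 unfolding grav_lens_def continuous_within by auto
      show ?thesis using order_tendstoD(1)[OF cont k0] .
    qed
    obtain b where b: "b > 0" "mean_density \<kappa> b < 1" using exists_small[OF g] by blast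
    obtain d where d: "d > 0" "\<And>t. t > 0 \<Longrightarrow> t < d \<Longrightarrow> \<kappa> t > 1"
      using ev by (auto simp: eventually_at_right_field)
    define a where "a = min d b / 2"
    have a: "a > 0" "a < d" "a < b" using d b unfolding a_def by auto
    have ma: "mean_density \<kappa> a > 1" using d(2)[OF a(1,2)] m_gt_kappa[OF g a(1)] by simp
    obtain x where x: "a \<le> x" "x \<le> b" "mean_density \<kappa> x = 1"
      using IVT2'[of "mean_density \<kappa>" b 1 a] b ma a m_cont[OF g a(1), of b] by auto
    then show "\<exists>xE>0. deflection \<kappa> xE = xE" using defl a by (intro exI[of _ x]) auto
  qed
qed

end
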